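(* Let $n\ge1$, let $V$ be a finite set of values, let $\psi_{iv}\in\mathbb{R}$ ($1\le i\le n$, $v\in V$), let $W=(w_{vv'})$ be a real $|V|\times|V|$ matrix, fix $\alpha\in V$ and an integer $k$. Consider the integer program $$\max_{z}\ \sum_{i,v}(\psi_{iv}+w_{\alpha v})z_{iv}\quad\text{s.t.}\quad \sum_i z_{iv}\le k\ \ (\forall v\ne\alpha),\quad \sum_i z_{i\alpha}=k,\quad \sum_v z_{iv}=1\ \ (\forall i),\quad z_{iv}\in\{0,1\}.$$ Its LP relaxation (replacing $z_{iv}\in\{0,1\}$ by $0\le z_{iv}\le 1$) is tight, i.e. it has an integral optimal solution, so its optimal value equals that of the integer program. *)

theory Defs
  imports Complex_Main
begin

definition lp_feasible :: "nat \<Rightarrow> 'v set \<Rightarrow> 'v \<Rightarrow> int \<Rightarrow> (nat \<Rightarrow> 'v \<Rightarrow> real) \<Rightarrow> bool" where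
  "lp_feasible n V \<alpha> k z \<longleftrightarrow>
     (\<forall>i\<in>{1..n}. \<forall>v\<in>V. 0 \<le> z i v \<and> z i v \<le> 1) \<and>
     (\<forall>v\<in>V - {\<alpha>}. (\<Sum>i=1..n. z i v) \<le> real_of_int k) \<and>
     (\<Sum>i=1..n. z i \<alpha>) = real_of_int k \<and>
     (\<forall>i\<in>{1..n}. (\<Sum>v\<in>V. z i v) = 1)"

definition ip_feasible :: "nat \<Rightarrow> 'v set \<Rightarrow> 'v \<Rightarrow> int \<Rightarrow> (nat \<Rightarrow> 'v \<Rightarrow> real) \<Rightarrow> bool" where
  "ip_feasible n V \<alpha> k z \<longleftrightarrow>
     (\<forall>i\<in>{1..n}. \<forall>v\<in>V. z i v \<in> {0, 1}) \<and>
     (\<forall>v\<in>V - {\<alpha>}. (\<Sum>i=1..n. z i v) \<le> real_of_int k) \<and>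
     (\<Sum>i=1..n. z i \<alpha>) = real_of_int k \<and>
     (\<forall>i\<in>{1..n}. (\<Sum>v\<in>V. z i v) = 1)"

definition objective :: "nat \<Rightarrow> 'v set \<Rightarrow> (nat \<Rightarrow> 'v \<Rightarrow> real) \<Rightarrow> ('v \<Rightarrow> 'v \<Rightarrow> real) \<Rightarrow> 'v
     \<Rightarrow> (nat \<Rightarrow> 'v \<Rightarrow> real) \<Rightarrow> real" where
  "objective n V \<psi> W \<alpha> z = (\<Sum>i=1..n. \<Sum>v\<in>V. (\<psi> i v + W \<alpha> v) * z i v)"

end

theory Submission
  imports Defs
begin


lemma cycle_dir:
  fixes r :: "nat \<Rightarrow> 'a" and c :: "nat \<Rightarrow> 'b" and E :: "('a \<times> 'b) set"
  assumes lm: "l < m" and rm: "r m = r l"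
    and inR: "\<And>j. r j \<in> R" and inV: "\<And>j. c j \<in> V"
    and E1: "\<And>j. (r j, c j) \<in> E" and E2: "\<And>j. (r (Suc j), c j) \<in> E"
    and rl: "r (Suc l) \<noteq> r l" and cl: "\<And>j. l < j \<Longrightarrow> j < m \<Longrightarrow> c j \<noteq> c l"
    and fR: "finite R" and fV: "finite V"
  shows "\<exists>d::'a \<Rightarrow> 'b \<Rightarrow> real. d (r l) (c l) \<noteq> 0 \<and> (\<forall>i v. d i v \<noteq> 0 \<longrightarrow> (i, v) \<in> E)
     \<and> (\<forall>i\<in>R. (\<Sum>v\<in>V. d i v) = 0) \<and> (\<forall>v\<in>V. (\<Sum>i\<in>R. d i v) = 0)"
proof -
  define d :: "'a \<Rightarrow> 'b \<Rightarrow> real" where "d = (\<lambda>i v. \<Sum>j\<in>{l..<m}.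
     (if i = r j \<and> v = c j then 1 else 0) - (if i = r (Suc j) \<and> v = c j then 1 else 0))"
  have "d (r l) (c l) = 1"
  proof -
    have "d (r l) (c l) = ((if r l = r l \<and> c l = c l then 1 else 0) - (if r l = r (Suc l) \<and> c l = c l then 1 else 0))
       + (\<Sum>j\<in>{Suc l..<m}. (if r l = r j \<and> c l = c j then 1 else 0) - (if r l = r (Suc j) \<and> c l = c j then 1 else 0))"
      unfolding d_def using lm by (simp add: sum.atLeast_Suc_lessThan)
    also have "(\<Sum>j\<in>{Suc l..<m}. (if r l = r j \<and> c l = c j then 1 else 0) - (if r l = r (Suc j) \<and> c l = c j then 1 else (0::real))) = 0"
    proof (intro sum.neutral ballI)
      fix j assume "j \<in> {Suc l..<m}"
      then have "c j \<noteq> c l" using cl by auto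
      then show "(if r l = r j \<and> c l = c j then 1 else 0) - (if r l = r (Suc j) \<and> c l = c j then 1 else (0::real)) = 0" by auto
    qed
    finally show ?thesis using rl by simp
  qed
  moreover have "\<forall>i v. d i v \<noteq> 0 \<longrightarrow> (i, v) \<in> E"
  proof (intro allI impI)
    fix i v assume "d i v \<noteq> 0"
    then obtain j where "(if i = r j \<and> v = c j then 1 else 0) - (if i = r (Suc j) \<and> v = c j then 1 else (0::real)) \<noteq> 0"
      unfolding d_def by (meson sum.neutral)
    then show "(i, v) \<in> E" using E1[of j] E2[of j] by (auto split: if_splits)
  qed
  moreover have "\<forall>i\<in>R. (\<Sum>v\<in>V. d i v) = 0"
  proof
    fix i assume "i \<in> R"
    have "(\<Sum>v\<in>V. d i v) = (\<Sum>j\<in>{l..<m}. \<Sum>v\<in>V.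
     (if i = r j \<and> v = c j then 1 else 0) - (if i = r (Suc j) \<and> v = c j then 1 else 0))"
      unfolding d_def by (rule sum.swap)
    also have "\<dots> = (\<Sum>j\<in>{l..<m}. (if i = r j then 1 else 0) - (if i = r (Suc j) then 1 else 0))"
    proof (rule sum.cong[OF refl])
      fix j
      have a: "\<And>P. (\<Sum>v\<in>V. (if P \<and> v = c j then 1 else 0::real)) = (if P then 1 else 0)"
        using inV[of j] fV by (simp add: sum.delta')
      show "(\<Sum>v\<in>V. (if i = r j \<and> v = c j then 1 else 0) - (if i = r (Suc j) \<and> v = c j then 1 else 0)) =
        (if i = r j then 1 else 0) - (if i = r (Suc j) then 1 else (0::real))"
        by (simp only: sum_subtractf a)
    qed
    also have "\<dots> = - (\<Sum>j\<in>{l..<m}. (if i = r (Suc j) then 1 else 0) - (if i = r j then 1 else (0::real)))"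
      by (simp add: sum_negf[symmetric])
    also have "\<dots> = 0" using lm rm by (subst sum_Suc_diff'[where f = "\<lambda>j. if i = r j then 1 else (0::real)"]) auto
    finally show "(\<Sum>v\<in>V. d i v) = 0" .
  qed
  moreover have "\<forall>v\<in>V. (\<Sum>i\<in>R. d i v) = 0"
  proof
    fix v assume "v \<in> V"
    have "(\<Sum>i\<in>R. d i v) = (\<Sum>j\<in>{l..<m}. \<Sum>i\<in>R.
     (if i = r j \<and> v = c j then 1 else 0) - (if i = r (Suc j) \<and> v = c j then 1 else 0))"
      unfolding d_def by (rule sum.swap)
    also have "\<dots> = 0"
    proof (rule sum.neutral, rule ballI)
      fix j
      have a: "\<And>t P. t \<in> R \<Longrightarrow> (\<Sum>i\<in>R. (if i = t \<and> P then 1 else 0::real)) = (if P then 1 else 0)"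
        using fR by (simp add: sum.delta)
      show "(\<Sum>i\<in>R. (if i = r j \<and> v = c j then 1 else 0) - (if i = r (Suc j) \<and> v = c j then 1 else 0)) = (0::real)"
        by (simp only: sum_subtractf a inR)
    qed
    finally show "(\<Sum>i\<in>R. d i v) = 0" .
  qed
  ultimately show ?thesis by (intro exI[of _ d]) simp
qed

lemma step_size:
  fixes x d :: "'p \<Rightarrow> real"
  assumes fS: "finite S" and ne: "S \<noteq> {}" and h: "\<forall>p\<in>S. d p \<noteq> 0 \<and> x p \<notin> \<int>"
  shows "\<exists>t>0. (\<forall>p\<in>S. of_int \<lfloor>x p\<rfloor> \<le> x p + t * d p \<and> x p + t * d p \<le> of_int \<lceil>x p\<rceil>)
     \<and> (\<exists>p\<in>S. x p + t * d p \<in> \<int>)"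
proof -
  have fl: "of_int \<lfloor>x p\<rfloor> < x p" and ce: "x p < of_int \<lceil>x p\<rceil>" if "p \<in> S" for p
  proof -
    have "x p \<noteq> of_int \<lfloor>x p\<rfloor>" "x p \<noteq> of_int \<lceil>x p\<rceil>" using h that by (metis Ints_of_int)+
    moreover have "of_int \<lfloor>x p\<rfloor> \<le> x p" "x p \<le> of_int \<lceil>x p\<rceil>" by (rule of_int_floor_le, rule le_of_int_ceiling)
    ultimately show "of_int \<lfloor>x p\<rfloor> < x p" "x p < of_int \<lceil>x p\<rceil>" by linarith+
  qed
  define g where "g = (\<lambda>p. if d p > 0 then (of_int \<lceil>x p\<rceil> - x p) / d p else (x p - of_int \<lfloor>x p\<rfloor>) / (- d p))"
  have gpos: "g p > 0" if "p \<in> S" for p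
    using fl[OF that] ce[OF that] h that unfolding g_def by (auto simp: field_simps)
  define t where "t = Min (g ` S)"
  have tin: "t \<in> g ` S" unfolding t_def using fS ne by simp
  have tle: "t \<le> g p" if "p \<in> S" for p unfolding t_def using fS that by simp
  have tpos: "t > 0" using tin gpos by auto
  have bnd: "of_int \<lfloor>x p\<rfloor> \<le> x p + t * d p \<and> x p + t * d p \<le> of_int \<lceil>x p\<rceil>" if p: "p \<in> S" for p
  proof (cases "d p > 0")
    case True
    have "t * d p \<le> g p * d p" using tle[OF p] True by (simp add: mult_right_mono)
    also have "\<dots> = of_int \<lceil>x p\<rceil> - x p" using True by (simp add: g_def)
    finally show ?thesis using fl[OF p] tpos True by (simp add: add_pos_pos less_imp_le)
      (smt (verit) mult_pos_pos)
  next
    case False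
    then have dn: "d p < 0" using h p by force
    have "g p * d p \<le> t * d p" using tle[OF p] dn by (simp add: mult_right_mono_neg)
    moreover have "g p * d p = of_int \<lfloor>x p\<rfloor> - x p" using False dn by (simp add: g_def field_simps)
    moreover have "t * d p < 0" using tpos dn by (simp add: mult_pos_neg)
    ultimately show ?thesis using ce[OF p] by linarith
  qed
  from tin obtain p where p: "p \<in> S" "t = g p" by auto
  have "x p + t * d p \<in> \<int>"
  proof (cases "d p > 0")
    case True
    then have "x p + t * d p = of_int \<lceil>x p\<rceil>" using p by (simp add: g_def)
    then show ?thesis by simp
  next
    case False
    then have "d p \<noteq> 0" using h p by auto
    then have "x p + t * d p = of_int \<lfloor>x p\<rfloor>" using p False by (simp add: g_def field_simps)
    then show ?thesis by simp
  qed
  then show ?thesis using tpos bnd p by blast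
qed



lemma exists_dir:
  fixes x :: "'a \<Rightarrow> 'b \<Rightarrow> real"
  assumes fR: "finite R" and fV: "finite V"
   and rows: "\<forall>i\<in>R. (\<Sum>v\<in>V. x i v) \<in> \<int>" and cols: "\<forall>v\<in>V. (\<Sum>i\<in>R. x i v) \<in> \<int>"
   and p0: "i0 \<in> R" "v0 \<in> V" "x i0 v0 \<notin> \<int>"
  shows "\<exists>d::'a \<Rightarrow> 'b \<Rightarrow> real. (\<exists>i\<in>R. \<exists>v\<in>V. d i v \<noteq> 0) \<and> (\<forall>i v. d i v \<noteq> 0 \<longrightarrow> i \<in> R \<and> v \<in> V \<and> x i v \<notin> \<int>)
     \<and> (\<forall>i\<in>R. (\<Sum>v\<in>V. d i v) = 0) \<and> (\<forall>v\<in>V. (\<Sum>i\<in>R. d i v) = 0)"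
proof -
  define E where "E = {(i,v). i \<in> R \<and> v \<in> V \<and> x i v \<notin> \<int>}"
  have rowdeg: "\<exists>v'. v' \<noteq> v \<and> (i,v') \<in> E" if "(i,v) \<in> E" for i v
  proof (rule ccontr)
    assume "\<not> ?thesis"
    then have "\<forall>v'\<in>V - {v}. x i v' \<in> \<int>" using that unfolding E_def by auto
    then have "(\<Sum>v'\<in>V - {v}. x i v') \<in> \<int>" by (intro Ints_sum) auto
    moreover have "(\<Sum>v'\<in>V. x i v') = x i v + (\<Sum>v'\<in>V - {v}. x i v')"
      using that fV unfolding E_def by (simp add: sum.remove)
    moreover have "(\<Sum>v'\<in>V. x i v') \<in> \<int>" using rows that unfolding E_def by auto
    ultimately have "x i v \<in> \<int>" by (metis Ints_diff add_diff_cancel_right')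
    then show False using that unfolding E_def by auto
  qed
  have coldeg: "\<exists>i'. i' \<noteq> i \<and> (i',v) \<in> E" if "(i,v) \<in> E" for i v
  proof (rule ccontr)
    assume "\<not> ?thesis"
    then have "\<forall>i'\<in>R - {i}. x i' v \<in> \<int>" using that unfolding E_def by auto
    then have "(\<Sum>i'\<in>R - {i}. x i' v) \<in> \<int>" by (intro Ints_sum) auto
    moreover have "(\<Sum>i'\<in>R. x i' v) = x i v + (\<Sum>i'\<in>R - {i}. x i' v)"
      using that fR sum.remove[of R i "\<lambda>i'. x i' v"] unfolding E_def by simp
    moreover have "(\<Sum>i'\<in>R. x i' v) \<in> \<int>" using cols that unfolding E_def by auto
    ultimately have "x i v \<in> \<int>" by (metis Ints_diff add_diff_cancel_right')
    then show False using that unfolding E_def by auto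
  qed
  define nr where "nr = (\<lambda>i v. SOME i'. i' \<noteq> i \<and> (i',v) \<in> E)"
  define nc where "nc = (\<lambda>i v. SOME v'. v' \<noteq> v \<and> (i,v') \<in> E)"
  have nr: "nr i v \<noteq> i \<and> (nr i v, v) \<in> E" if "(i,v) \<in> E" for i v
    unfolding nr_def using someI_ex[OF coldeg[OF that]] .
  have nc: "nc i v \<noteq> v \<and> (i, nc i v) \<in> E" if "(i,v) \<in> E" for i v
    unfolding nc_def using someI_ex[OF rowdeg[OF that]] .
  define w where "w = rec_nat (i0,v0) (\<lambda>_ p. (nr (fst p) (snd p), nc (nr (fst p) (snd p)) (snd p)))"
  define r where "r = (\<lambda>j. fst (w j))"
  define c where "c = (\<lambda>j. snd (w j))"
  have rS: "r (Suc j) = nr (r j) (c j)" and cS: "c (Suc j) = nc (r (Suc j)) (c j)" for j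
    by (simp_all add: r_def c_def w_def)
  have E1: "(r j, c j) \<in> E" for j
  proof (induction j)
    case 0 then show ?case using p0 by (simp add: r_def c_def w_def E_def)
  next
    case (Suc j)
    then have "(r (Suc j), c j) \<in> E" using nr rS by auto
    then show ?case using nc cS by metis
  qed
  have E2: "(r (Suc j), c j) \<in> E" for j using E1[of j] nr rS by auto
  have rne: "r (Suc j) \<noteq> r j" for j using E1[of j] nr rS by auto
  have cne: "c (Suc j) \<noteq> c j" for j using E2[of j] nc cS by auto
  have inR: "r j \<in> R" and inV: "c j \<in> V" for j using E1[of j] by (auto simp: E_def)
  define X :: "nat \<Rightarrow> 'a + 'b" where "X = (\<lambda>t. if even t then Inl (r (t div 2)) else Inr (c (t div 2)))"
  have "range X \<subseteq> R <+> V" using inR inV by (auto simp: X_def)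
  then have "finite (range X)" using fR fV by (meson finite_Plus finite_subset)
  then have "\<not> inj X" using finite_imageD infinite_UNIV_nat by blast
  then obtain a b where ab: "a \<noteq> b" "X a = X b" unfolding inj_def by blast
  define P where "P = (\<lambda>b. \<exists>a<b. X a = X b)"
  have "\<exists>b. P b" using ab unfolding P_def by (metis nat_neq_iff)
  define b0 where "b0 = (LEAST b. P b)"
  have Pb0: "P b0" unfolding b0_def using \<open>\<exists>b. P b\<close> by (metis LeastI)
  have minb: "X a' \<noteq> X b'" if "a' < b'" "b' < b0" for a' b'
    using not_less_Least[of b' P] that unfolding b0_def P_def by blast
  from Pb0 obtain a where a: "a < b0" "X a = X b0" unfolding P_def by blast
  show ?thesis
  proof (cases "even a")
    case True
    then have eb: "even b0" using a by (auto simp: X_def split: if_splits)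
    define l where "l = a div 2"
    define m where "m = b0 div 2"
    have lm: "l < m" using a True eb by (auto simp: l_def m_def elim!: evenE)
    have rm: "r m = r l" using a True eb by (simp add: X_def l_def m_def)
    have cl: "c j \<noteq> c l" if "l < j" "j < m" for j
    proof -
      have "X (2*l+1) \<noteq> X (2*j+1)" using that eb by (intro minb) (auto simp: m_def elim!: evenE)
      then show ?thesis by (auto simp: X_def)
    qed
    obtain d :: "'a \<Rightarrow> 'b \<Rightarrow> real" where d: "d (r l) (c l) \<noteq> 0" "\<forall>i v. d i v \<noteq> 0 \<longrightarrow> (i, v) \<in> E"
      "\<forall>i\<in>R. (\<Sum>v\<in>V. d i v) = 0" "\<forall>v\<in>V. (\<Sum>i\<in>R. d i v) = 0"
      using cycle_dir[OF lm rm inR inV E1 E2 rne cl fR fV] by blast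
    show ?thesis
      apply (rule exI[of _ d])
      using d inR[of l] inV[of l] by (auto simp: E_def)
  next
    case False
    then have ob: "odd b0" using a by (auto simp: X_def split: if_splits)
    define l where "l = a div 2"
    define m where "m = b0 div 2"
    have lm: "l < m" using a False ob by (auto simp: l_def m_def elim!: oddE)
    have cm: "c m = c l" using a False ob by (simp add: X_def l_def m_def)
    have rl: "r (Suc j) \<noteq> r (Suc l)" if "l < j" "j < m" for j
    proof -
      have "X (2*(Suc l)) \<noteq> X (2*(Suc j))" using that ob by (intro minb) (auto simp: m_def elim!: oddE)
      then show ?thesis by (auto simp: X_def)
    qed
    define E' where "E' = {(v,i). (i,v) \<in> E}"
    obtain d' :: "'b \<Rightarrow> 'a \<Rightarrow> real" where d: "d' (c l) (r (Suc l)) \<noteq> 0" "\<forall>v i. d' v i \<noteq> 0 \<longrightarrow> (v, i) \<in> E'"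
      "\<forall>v\<in>V. (\<Sum>i\<in>R. d' v i) = 0" "\<forall>i\<in>R. (\<Sum>v\<in>V. d' v i) = 0"
    proof -
      have e1: "\<And>j. (c j, r (Suc j)) \<in> E'" and e2: "\<And>j. (c (Suc j), r (Suc j)) \<in> E'"
        using E1 E2 unfolding E'_def by auto
      show ?thesis
      using cycle_dir[where l=l and m=m and r=c and c="\<lambda>j. r (Suc j)" and R=V and V=R and E=E', OF lm cm inV inR e1 e2 cne]
        rl fV fR that by blast
    qed
    show ?thesis
      apply (rule exI[of _ "\<lambda>i v. d' v i"])
      using d inR[of "Suc l"] inV[of l] by (auto simp: E_def E'_def)
  qed
qed



definition slackx :: "nat \<Rightarrow> int \<Rightarrow> (nat \<Rightarrow> 'v \<Rightarrow> real) \<Rightarrow> nat \<Rightarrow> 'v \<Rightarrow> real" where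
  "slackx n k z i v = (if i = 0 then real_of_int k - (\<Sum>i'=1..n. z i' v) else z i v)"

definition fracset :: "nat \<Rightarrow> 'v set \<Rightarrow> int \<Rightarrow> (nat \<Rightarrow> 'v \<Rightarrow> real) \<Rightarrow> (nat \<times> 'v) set" where
  "fracset n V k z = {p \<in> {0..n} \<times> V. slackx n k z (fst p) (snd p) \<notin> \<int>}"

lemma sum_0n: "(\<Sum>i\<in>{0..n}. f i) = f 0 + (\<Sum>i=1..n. f i)" for f :: "nat \<Rightarrow> real"
  by (simp add: sum.atLeast_Suc_atMost)

lemma round_lp:
  assumes fV: "finite V" and aV: "\<alpha> \<in> V"
  shows "lp_feasible n V \<alpha> k z \<Longrightarrow> \<exists>z'. ip_feasible n V \<alpha> k z' \<and> objective n V \<psi> W \<alpha> z \<le> objective n V \<psi> W \<alpha> z'"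
proof (induction "card (fracset n V k z)" arbitrary: z rule: less_induct)
  case less
  note lp = less.prems[unfolded lp_feasible_def]
  have ffin: "finite (fracset n V k z)" unfolding fracset_def using fV by auto
  show ?case
  proof (cases "fracset n V k z = {}")
    case True
    have "z i v \<in> {0,1}" if "i \<in> {1..n}" "v \<in> V" for i v
    proof -
      have "(i, v) \<notin> fracset n V k z" using True by auto
      then have "z i v \<in> \<int>" using that by (auto simp: fracset_def slackx_def)
      then obtain m where m: "z i v = of_int m" by (auto elim: Ints_cases)
      have "0 \<le> z i v" "z i v \<le> 1" using lp that by auto
      then have "0 \<le> m" "m \<le> 1" using m by auto
      then have "m = 0 \<or> m = 1" by auto
      then show ?thesis using m by auto
    qed
    then have "ip_feasible n V \<alpha> k z" using lp unfolding ip_feasible_def by blast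
    then show ?thesis by blast
  next
    case False
    then obtain i0 v0 where p0: "(i0, v0) \<in> fracset n V k z" by auto
    let ?x = "slackx n k z"
    have rowsZ: "\<forall>i\<in>{0..n}. (\<Sum>v\<in>V. ?x i v) \<in> \<int>"
    proof
      fix i assume i: "i \<in> {0..n}"
      show "(\<Sum>v\<in>V. ?x i v) \<in> \<int>"
      proof (cases "i = 0")
        case True
        have "(\<Sum>v\<in>V. ?x i v) = (\<Sum>v\<in>V. real_of_int k) - (\<Sum>v\<in>V. \<Sum>i'=1..n. z i' v)"
          using True by (simp add: slackx_def sum_subtractf)
        also have "(\<Sum>v\<in>V. \<Sum>i'=1..n. z i' v) = (\<Sum>i'=1..n. \<Sum>v\<in>V. z i' v)" by (rule sum.swap)
        also have "\<dots> = (\<Sum>i'=1..n. 1)" using lp by (intro sum.cong) auto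
        finally show ?thesis by simp
      next
        case False
        then have "(\<Sum>v\<in>V. ?x i v) = 1" using lp i by (simp add: slackx_def)
        then show ?thesis by simp
      qed
    qed
    have colsZ: "\<forall>v\<in>V. (\<Sum>i\<in>{0..n}. ?x i v) \<in> \<int>"
    proof
      fix v assume "v \<in> V"
      have "(\<Sum>i\<in>{0..n}. ?x i v) = ?x 0 v + (\<Sum>i=1..n. ?x i v)" by (rule sum_0n)
      also have "(\<Sum>i=1..n. ?x i v) = (\<Sum>i=1..n. z i v)" by (intro sum.cong) (auto simp: slackx_def)
      finally show "(\<Sum>i\<in>{0..n}. ?x i v) \<in> \<int>" by (simp add: slackx_def)
    qed
    have p0': "i0 \<in> {0..n}" "v0 \<in> V" "?x i0 v0 \<notin> \<int>" using p0 by (auto simp: fracset_def)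
    obtain d :: "nat \<Rightarrow> 'a \<Rightarrow> real" where d: "\<exists>i\<in>{0..n}. \<exists>v\<in>V. d i v \<noteq> 0"
      "\<forall>i v. d i v \<noteq> 0 \<longrightarrow> i \<in> {0..n} \<and> v \<in> V \<and> ?x i v \<notin> \<int>"
      "\<forall>i\<in>{0..n}. (\<Sum>v\<in>V. d i v) = 0" "\<forall>v\<in>V. (\<Sum>i\<in>{0..n}. d i v) = 0"
      using exists_dir[OF _ fV rowsZ colsZ p0'] by auto
    define cd where "cd = (\<Sum>i=1..n. \<Sum>v\<in>V. (\<psi> i v + W \<alpha> v) * d i v)"
    define s :: real where "s = (if cd \<ge> 0 then 1 else -1)"
    define d' where "d' = (\<lambda>i v. s * d i v)"
    have s0: "s \<noteq> 0" by (simp add: s_def)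
    have d': "\<exists>i\<in>{0..n}. \<exists>v\<in>V. d' i v \<noteq> 0"
      "\<forall>i v. d' i v \<noteq> 0 \<longrightarrow> i \<in> {0..n} \<and> v \<in> V \<and> ?x i v \<notin> \<int>"
      "\<forall>i\<in>{0..n}. (\<Sum>v\<in>V. d' i v) = 0" "\<forall>v\<in>V. (\<Sum>i\<in>{0..n}. d' i v) = 0"
      using d s0 by (auto simp: d'_def simp flip: sum_distrib_left)
    have cd': "(\<Sum>i=1..n. \<Sum>v\<in>V. (\<psi> i v + W \<alpha> v) * d' i v) \<ge> 0"
    proof -
      have "(\<Sum>i=1..n. \<Sum>v\<in>V. (\<psi> i v + W \<alpha> v) * d' i v) = s * cd"
        by (simp add: cd_def d'_def sum_distrib_left algebra_simps)
      then show ?thesis by (simp add: s_def)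
    qed
    define S where "S = {p \<in> {0..n} \<times> V. d' (fst p) (snd p) \<noteq> 0}"
    have fS: "finite S" using fV by (simp add: S_def)
    have Sne: "S \<noteq> {}" using d'(1) by (auto simp: S_def)
    have Sh: "\<forall>p\<in>S. d' (fst p) (snd p) \<noteq> 0 \<and> ?x (fst p) (snd p) \<notin> \<int>" using d'(2) by (auto simp: S_def)
    obtain t where t: "t > 0"
      "\<forall>p\<in>S. of_int \<lfloor>?x (fst p) (snd p)\<rfloor> \<le> ?x (fst p) (snd p) + t * d' (fst p) (snd p)
          \<and> ?x (fst p) (snd p) + t * d' (fst p) (snd p) \<le> of_int \<lceil>?x (fst p) (snd p)\<rceil>"
      "\<exists>p\<in>S. ?x (fst p) (snd p) + t * d' (fst p) (snd p) \<in> \<int>"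
      using step_size[OF fS Sne Sh] by blast
    define z' where "z' = (\<lambda>i v. z i v + t * d' i v)"
    have key: "slackx n k z' i v = ?x i v + t * d' i v" if "v \<in> V" for i v
    proof (cases "i = 0")
      case True
      have "(\<Sum>i\<in>{0..n}. d' i v) = 0" using d'(4) that by auto
      then have "(\<Sum>i=1..n. d' i v) = - d' 0 v" by (simp add: sum_0n)
      then show ?thesis using True
        by (simp add: slackx_def z'_def sum.distrib flip: sum_distrib_left)
    next
      case False then show ?thesis by (simp add: slackx_def z'_def)
    qed
    have bnd: "d' i v = 0 \<or> (of_int \<lfloor>?x i v\<rfloor> \<le> slackx n k z' i v \<and> slackx n k z' i v \<le> of_int \<lceil>?x i v\<rceil>)"
      if "v \<in> V" for i v
      using t(2) key[OF that] d'(2) unfolding S_def by fastforce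
    have sub: "fracset n V k z' \<subset> fracset n V k z"
    proof
      show "fracset n V k z' \<subseteq> fracset n V k z"
      proof
        fix p assume p: "p \<in> fracset n V k z'"
        show "p \<in> fracset n V k z"
        proof (cases "d' (fst p) (snd p) = 0")
          case True then show ?thesis using p key[of "snd p" "fst p"] unfolding fracset_def by auto
        next
          case False then show ?thesis using d'(2) unfolding fracset_def by (cases p) auto
        qed
      qed
      from t(3) obtain p where p: "p \<in> S" "?x (fst p) (snd p) + t * d' (fst p) (snd p) \<in> \<int>" by blast
      obtain a b where ab: "p = (a, b)" by (cases p)
      have bV: "b \<in> V" and a: "a \<in> {0..n}" using p(1) ab by (auto simp: S_def)
      have "slackx n k z' a b \<in> \<int>" using p(2) key[OF bV, of a] ab by simp
      then have "p \<notin> fracset n V k z'" using ab unfolding fracset_def by simp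
      moreover have "p \<in> fracset n V k z" using p(1) Sh ab bV a unfolding fracset_def by auto
      ultimately show "fracset n V k z' \<noteq> fracset n V k z" by blast
    qed
    have lt: "card (fracset n V k z') < card (fracset n V k z)" using sub ffin by (rule psubset_card_mono[rotated])
    have lp': "lp_feasible n V \<alpha> k z'"
      unfolding lp_feasible_def
    proof (intro conjI ballI)
      fix i v assume i: "i \<in> {1..n}" and v: "v \<in> V"
      have x: "?x i v = z i v" "slackx n k z' i v = z' i v" using i by (auto simp: slackx_def)
      have "0 \<le> z i v" "z i v \<le> 1" using lp i v by auto
      then have "0 \<le> \<lfloor>z i v\<rfloor>" "\<lceil>z i v\<rceil> \<le> 1" by auto
      then have f: "0 \<le> real_of_int \<lfloor>z i v\<rfloor>" "real_of_int \<lceil>z i v\<rceil> \<le> 1" by simp_all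
      have "d' i v = 0 \<or> (of_int \<lfloor>z i v\<rfloor> \<le> z' i v \<and> z' i v \<le> of_int \<lceil>z i v\<rceil>)"
        using bnd[OF v, of i] x by simp
      then have "0 \<le> z' i v \<and> z' i v \<le> 1"
      proof
        assume "d' i v = 0" then show ?thesis
          using \<open>0 \<le> z i v\<close> \<open>z i v \<le> 1\<close> by (simp add: z'_def)
      next
        assume "of_int \<lfloor>z i v\<rfloor> \<le> z' i v \<and> z' i v \<le> of_int \<lceil>z i v\<rceil>"
        then show ?thesis using f by linarith
      qed
      then show "0 \<le> z' i v" "z' i v \<le> 1" by simp_all
    next
      fix v assume v: "v \<in> V - {\<alpha>}"
      have "0 \<le> ?x 0 v" using lp v by (simp add: slackx_def)
      then have "0 \<le> \<lfloor>?x 0 v\<rfloor>" by auto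
      then have f: "0 \<le> real_of_int \<lfloor>?x 0 v\<rfloor>" by simp
      have vV: "v \<in> V" using v by simp
      have "0 \<le> slackx n k z' 0 v"
        using bnd[OF vV, of 0] key[OF vV, of 0] f \<open>0 \<le> ?x 0 v\<close> by (elim disjE) (simp, linarith)
      then show "(\<Sum>i=1..n. z' i v) \<le> real_of_int k" by (simp add: slackx_def)
    next
      have "?x 0 \<alpha> = 0" using lp by (simp add: slackx_def)
      then have "d' 0 \<alpha> = 0" using d'(2) by force
      then have "slackx n k z' 0 \<alpha> = 0" using key[OF aV, of 0] \<open>?x 0 \<alpha> = 0\<close> by simp
      then show "(\<Sum>i=1..n. z' i \<alpha>) = real_of_int k" by (simp add: slackx_def)
    next
      fix i assume i: "i \<in> {1..n}"
      then have "(\<Sum>v\<in>V. d' i v) = 0" using d'(3) by auto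
      then show "(\<Sum>v\<in>V. z' i v) = 1" using lp i by (simp add: z'_def sum.distrib flip: sum_distrib_left)
    qed
    have obj: "objective n V \<psi> W \<alpha> z \<le> objective n V \<psi> W \<alpha> z'"
    proof -
      have "objective n V \<psi> W \<alpha> z' = objective n V \<psi> W \<alpha> z + t * (\<Sum>i=1..n. \<Sum>v\<in>V. (\<psi> i v + W \<alpha> v) * d' i v)"
        unfolding objective_def z'_def by (simp add: algebra_simps sum.distrib sum_distrib_left)
      then show ?thesis using cd' t(1) by simp
    qed
    obtain z'' where "ip_feasible n V \<alpha> k z''" "objective n V \<psi> W \<alpha> z' \<le> objective n V \<psi> W \<alpha> z''"
      using less.hyps[OF lt lp'] by blast
    then show ?thesis using obj by (meson order_trans)
  qed
qed



lemma ip_obj: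
  assumes fV: "finite V" and ip: "ip_feasible n V \<alpha> k z"
  shows "objective n V \<psi> W \<alpha> z \<in> (\<lambda>A. \<Sum>p\<in>A. \<psi> (fst p) (snd p) + W \<alpha> (snd p)) ` Pow ({1..n} \<times> V)"
proof -
  let ?c = "\<lambda>p. \<psi> (fst p) (snd p) + W \<alpha> (snd p)"
  let ?A = "{p \<in> {1..n} \<times> V. z (fst p) (snd p) = 1}"
  have "objective n V \<psi> W \<alpha> z = (\<Sum>p\<in>{1..n} \<times> V. ?c p * z (fst p) (snd p))"
    unfolding objective_def by (simp add: sum.cartesian_product split_def)
  also have "\<dots> = (\<Sum>p\<in>{1..n} \<times> V. if z (fst p) (snd p) = 1 then ?c p else 0)"
  proof (rule sum.cong[OF refl])
    fix p assume pp: "p \<in> {1..n} \<times> V"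
    have "z (fst p) (snd p) \<in> {0,1}" using ip pp unfolding ip_feasible_def mem_Times_iff by blast
    then show "?c p * z (fst p) (snd p) = (if z (fst p) (snd p) = 1 then ?c p else 0)" by auto
  qed
  also have "\<dots> = (\<Sum>p\<in>?A. ?c p)" using fV by (simp add: sum.inter_filter)
  finally show ?thesis by blast
qed

theorem theorem11:
  fixes n :: nat and V :: "'v set" and \<psi> :: "nat \<Rightarrow> 'v \<Rightarrow> real"
    and W :: "'v \<Rightarrow> 'v \<Rightarrow> real" and \<alpha> :: 'v and k :: int
  assumes "n \<ge> 1" and "finite V" and "\<alpha> \<in> V"
    and "\<exists>z. lp_feasible n V \<alpha> k z"
  shows "(\<exists>z. ip_feasible n V \<alpha> k z \<and>
             (\<forall>z'. lp_feasible n V \<alpha> k z' \<longrightarrow> objective n V \<psi> W \<alpha> z' \<le> objective n V \<psi> W \<alpha> z)) \<and>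
         (SUP z\<in>{z. lp_feasible n V \<alpha> k z}. objective n V \<psi> W \<alpha> z)
         = (SUP z\<in>{z. ip_feasible n V \<alpha> k z}. objective n V \<psi> W \<alpha> z)"
proof -
  let ?obj = "objective n V \<psi> W \<alpha>"
  let ?I = "{z. ip_feasible n V \<alpha> k z}"
  let ?L = "{z. lp_feasible n V \<alpha> k z}"
  obtain z0 where "lp_feasible n V \<alpha> k z0" using assms(4) by blast
  then obtain z1 where z1: "ip_feasible n V \<alpha> k z1"
    using round_lp[OF assms(2,3)] by blast
  have fin: "finite (?obj ` ?I)"
    by (rule finite_subset[of _ "(\<lambda>A. \<Sum>p\<in>A. \<psi> (fst p) (snd p) + W \<alpha> (snd p)) ` Pow ({1..n} \<times> V)"])
      (use ip_obj[OF assms(2)] assms(2) in auto)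
  have ne: "?obj ` ?I \<noteq> {}" using z1 by blast
  obtain zs where zs: "zs \<in> ?I" "?obj zs = Max (?obj ` ?I)" using Max_in[OF fin ne] by auto
  have ipmax: "?obj z \<le> ?obj zs" if "z \<in> ?I" for z using zs(2) fin that by simp
  have iplp: "lp_feasible n V \<alpha> k z" if "ip_feasible n V \<alpha> k z" for z
    using that unfolding ip_feasible_def lp_feasible_def by force
  have lpmax: "?obj z \<le> ?obj zs" if lpz: "lp_feasible n V \<alpha> k z" for z
  proof -
    obtain z' where "ip_feasible n V \<alpha> k z'" "?obj z \<le> ?obj z'"
      using round_lp[OF assms(2,3) lpz] by blast
    then show ?thesis using ipmax[of z'] by simp
  qed
  have "(SUP z\<in>?L. ?obj z) = ?obj zs"
    by (rule cSup_eq_maximum) (use zs(1) iplp lpmax in auto)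
  moreover have "(SUP z\<in>?I. ?obj z) = ?obj zs"
    by (rule cSup_eq_maximum) (use zs(1) ipmax in auto)
  ultimately show ?thesis using zs(1) lpmax by auto
qed

end
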